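(* Identify ${\bf k}^3$ with the space $S^2{\bf k}^2$ of binary quadratic forms, on which $SL_2$ acts through its image $SO_3=SO(S^2{\bf k}^2,Q)$, where $Q$ is the (up to scalar unique) nondegenerate $SL_2$-invariant quadratic form. Then the morphism $\varphi:{\bf k}^2\oplus l{\bf k}^3\to(l+1){\bf k}^3$, $\varphi(e,Q_1,\dots,Q_l)=(Q_1,\dots,Q_l,e^2)$, induces an isomorphism ${\bf k}[{\bf k}^2\oplus l{\bf k}^3]^{SL_2}\cong{\bf k}[(l+1){\bf k}^3]^{SO_3}/(d)$, where $d=Q(v_{l+1},v_{l+1})$ is the quadratic form evaluated on the last component.
   Context: ${\bf k}$ is algebraically closed of characteristic $0$; $l{\bf k}^3$ denotes the direct sum of $l$ copies of ${\bf k}^3$, with diagonal action; $e^2\in S^2{\bf k}^2$ denotes the square of the vector $e\in{\bf k}^2$. *)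

theory Defs
  imports "HOL-Analysis.Analysis" "HOL-Computational_Algebra.Polynomial"
begin

inductive_set pfun :: "('a \<Rightarrow> 'k::comm_ring_1) set \<Rightarrow> ('a \<Rightarrow> 'k) set"
  for C :: "('a \<Rightarrow> 'k) set" where
  pf_const: "(\<lambda>_. c) \<in> pfun C"
| pf_coord: "x \<in> C \<Longrightarrow> x \<in> pfun C"
| pf_add: "f \<in> pfun C \<Longrightarrow> g \<in> pfun C \<Longrightarrow> (\<lambda>v. f v + g v) \<in> pfun C"
| pf_mult: "f \<in> pfun C \<Longrightarrow> g \<in> pfun C \<Longrightarrow> (\<lambda>v. f v * g v) \<in> pfun C"

definition alg_closed :: "'k::field itself \<Rightarrow> bool" where
  "alg_closed _ \<longleftrightarrow> (\<forall>p::'k poly. degree p > 0 \<longrightarrow> (\<exists>x. poly p x = 0))"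

text \<open>k^3 = S^2 k^2: coordinates (a,b,c) of a \<epsilon>1^2 + b \<epsilon>1\<epsilon>2 + c \<epsilon>2^2.\<close>
definition sq_vec :: "'k::comm_ring_1 ^ 2 \<Rightarrow> 'k ^ 3" where
  "sq_vec e = (\<chi> i. if i = 0 then (e$0)^2 else if i = 1 then 2 * (e$0) * (e$1) else (e$1)^2)"

text \<open>Action of g in GL_2 on S^2 k^2, g(u v) = (g u)(g v).\<close>
definition sym2_act :: "'k::comm_ring_1 ^ 2 ^ 2 \<Rightarrow> 'k ^ 3 \<Rightarrow> 'k ^ 3" where
  "sym2_act g v =
     (\<chi> i. if i = 0 then v$0 * (g$0$0)^2 + v$1 * g$0$0 * g$0$1 + v$2 * (g$0$1)^2
           else if i = 1 then 2 * v$0 * g$0$0 * g$1$0 + v$1 * (g$0$0 * g$1$1 + g$0$1 * g$1$0)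
                              + 2 * v$2 * g$0$1 * g$1$1
           else v$0 * (g$1$0)^2 + v$1 * g$1$0 * g$1$1 + v$2 * (g$1$1)^2)"

text \<open>The nondegenerate SL_2-invariant quadratic form on S^2 k^2 (discriminant).\<close>
definition Qform :: "'k::comm_ring_1 ^ 3 \<Rightarrow> 'k" where
  "Qform v = (v$1)^2 - 4 * (v$0) * (v$2)"

definition SL2 :: "('k::comm_ring_1 ^ 2 ^ 2) set" where
  "SL2 = {g. det g = 1}"

definition SO3 :: "('k::comm_ring_1 ^ 3 ^ 3) set" where
  "SO3 = {M. det M = 1 \<and> (\<forall>v. Qform (M *v v) = Qform v)}"

text \<open>(l+1) k^3: points are nat \<Rightarrow> 'k^3, components 0..l used.\<close>
definition coords_V :: "nat \<Rightarrow> ((nat \<Rightarrow> 'k ^ 3) \<Rightarrow> 'k) set" where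
  "coords_V l = {(\<lambda>v. v i $ j) | i j. i \<le> l}"

text \<open>k^2 + l k^3: points are (e, Q) with components Q 1 .. Q l used.\<close>
definition coords_W :: "nat \<Rightarrow> (('k ^ 2) \<times> (nat \<Rightarrow> 'k ^ 3) \<Rightarrow> 'k) set" where
  "coords_W l = {(\<lambda>(e,Q). e $ j) | j. True} \<union> {(\<lambda>(e,Q). Q i $ j) | i j. 1 \<le> i \<and> i \<le> l}"

definition inv_SO3 :: "nat \<Rightarrow> ((nat \<Rightarrow> 'k::comm_ring_1 ^ 3) \<Rightarrow> 'k) set" where
  "inv_SO3 l = {f \<in> pfun (coords_V l). \<forall>M\<in>SO3. \<forall>v. f (\<lambda>i. M *v v i) = f v}"

definition inv_SL2 :: "nat \<Rightarrow> (('k::comm_ring_1 ^ 2) \<times> (nat \<Rightarrow> 'k ^ 3) \<Rightarrow> 'k) set" where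
  "inv_SL2 l = {f \<in> pfun (coords_W l).
      \<forall>g\<in>SL2. \<forall>e Q. f (g *v e, \<lambda>i. sym2_act g (Q i)) = f (e, Q)}"

text \<open>phi(e,Q_1..Q_l) = (Q_1,..,Q_l,e^2): component i<l is Q_(i+1), component l is e^2.\<close>
definition phi :: "nat \<Rightarrow> ('k::comm_ring_1 ^ 2) \<times> (nat \<Rightarrow> 'k ^ 3) \<Rightarrow> (nat \<Rightarrow> 'k ^ 3)" where
  "phi l = (\<lambda>(e,Q). \<lambda>i. if i < l then Q (Suc i) else sq_vec e)"

definition dlast :: "nat \<Rightarrow> (nat \<Rightarrow> 'k::comm_ring_1 ^ 3) \<Rightarrow> 'k" where
  "dlast l v = Qform (v l)"

end

theory Submission
  imports Defs
begin


lemma pfun_const': "(\<lambda>_. c) \<in> pfun C" by (rule pf_const)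

lemma pfun_sum:
  assumes "finite A" "\<And>i. i \<in> A \<Longrightarrow> f i \<in> pfun C"
  shows "(\<lambda>v. \<Sum>i\<in>A. f i v) \<in> pfun C"
  using assms
proof (induction A rule: finite_induct)
  case empty then show ?case using pf_const[of 0] by simp
next
  case (insert x F)
  then show ?case using pf_add[of "f x" C "\<lambda>v. \<Sum>i\<in>F. f i v"] by simp
qed

lemma pfun_mult_const: "f \<in> pfun C \<Longrightarrow> (\<lambda>v. a * f v) \<in> pfun C"
  using pf_mult[OF pf_const] .

lemma pfun_neg: "f \<in> pfun C \<Longrightarrow> (\<lambda>v. - f v) \<in> pfun C"
  using pfun_mult_const[of f C "-1"] by simp

lemma pfun_diff: "f \<in> pfun C \<Longrightarrow> g \<in> pfun C \<Longrightarrow> (\<lambda>v. f v - g v) \<in> pfun C"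
  using pf_add[OF _ pfun_neg, of f C g] by simp

lemma pfun_pow: "f \<in> pfun C \<Longrightarrow> (\<lambda>v. f v ^ n) \<in> pfun C"
  by (induction n) (auto intro: pf_const pf_mult)

lemma pfun_comp:
  assumes "f \<in> pfun C" "\<And>c. c \<in> C \<Longrightarrow> (\<lambda>x. c (\<phi> x)) \<in> pfun C'"
  shows "(\<lambda>x. f (\<phi> x)) \<in> pfun C'"
  using assms(1)
proof induction
  case (pf_const c) then show ?case by (rule pf_const)
next
  case (pf_coord x) then show ?case using assms(2) by blast
next
  case (pf_add f g) then show ?case using pfun.pf_add by fastforce
next
  case (pf_mult f g) then show ?case using pfun.pf_mult by fastforce
qed

lemma pfun_local:
  assumes "f \<in> pfun C" "\<And>c. c \<in> C \<Longrightarrow> c x = c y"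
  shows "f x = f y"
  using assms(1) by induction (auto simp: assms(2))

lemma pfun_line:
  fixes f :: "'a \<Rightarrow> 'k::comm_ring_1"
  assumes "f \<in> pfun C" "\<And>c. c \<in> C \<Longrightarrow> \<exists>p. \<forall>t. c (\<gamma> t) = poly p t"
  shows "\<exists>p. \<forall>t. f (\<gamma> t) = poly p t"
  using assms(1)
proof induction
  case (pf_const c) then show ?case by (intro exI[of _ "[:c:]"]) simp
next
  case (pf_coord x) then show ?case using assms(2) by blast
next
  case (pf_add f g)
  then obtain p q where "\<forall>t. f (\<gamma> t) = poly p t" "\<forall>t. g (\<gamma> t) = poly q t" by blast
  then show ?case by (intro exI[of _ "p + q"]) simp
next
  case (pf_mult f g)
  then obtain p q where "\<forall>t. f (\<gamma> t) = poly p t" "\<forall>t. g (\<gamma> t) = poly q t" by blast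
  then show ?case by (intro exI[of _ "p * q"]) simp
qed

lemma poly_zero_cofinite:
  fixes p :: "'k::field_char_0 poly"
  assumes "finite S" "\<And>t. t \<notin> S \<Longrightarrow> poly p t = 0"
  shows "p = 0"
proof (rule ccontr)
  assume "p \<noteq> 0"
  then have "finite {x. poly p x = 0}" by (rule poly_roots_finite)
  moreover have "- S \<subseteq> {x. poly p x = 0}" using assms(2) by auto
  ultimately have "finite (- S)" by (rule finite_subset[rotated])
  with assms(1) have "finite (UNIV :: 'k set)" by (metis finite_Un Compl_partition)
  then show False using infinite_UNIV_char_0 by blast
qed

lemma sqrt_exists:
  assumes "alg_closed TYPE('k::field_char_0)"
  shows "\<exists>s::'k. s^2 = a"
proof -
  have "degree [:-a, 0, 1::'k:] > 0" by simp
  then obtain x where "poly [:-a, 0, 1:] x = 0" using assms unfolding alg_closed_def by blast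
  then show ?thesis by (intro exI[of _ x]) (simp add: power2_eq_square algebra_simps)
qed


lemma three3[simp]: "(3::3) = 0" by simp
lemma two2[simp]: "(2::2) = 0" by simp

definition Mg :: "'k::comm_ring_1 ^ 2 ^ 2 \<Rightarrow> 'k ^ 3 ^ 3" where
  "Mg g = (\<chi> i j. if i = 0 then (if j = 0 then (g$0$0)^2 else if j = 1 then g$0$0*g$0$1 else (g$0$1)^2)
    else if i = 1 then (if j = 0 then 2*g$0$0*g$1$0 else if j = 1 then g$0$0*g$1$1 + g$0$1*g$1$0 else 2*g$0$1*g$1$1)
    else (if j = 0 then (g$1$0)^2 else if j = 1 then g$1$0*g$1$1 else (g$1$1)^2))"

lemma Mg_mult: "Mg g *v w = sym2_act g w"
  by (simp add: vec_eq_iff matrix_vector_mult_def sum_3 forall_3 sym2_act_def Mg_def algebra_simps)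

lemma det_Mg: "det (Mg (g::'k::comm_ring_1^2^2)) = det g ^ 3"
  unfolding det_3 det_2 by (simp add: Mg_def power2_eq_square power3_eq_cube algebra_simps)

lemma Qform_sym2: "Qform (sym2_act g w) = (det g)^2 * Qform (w::'k::comm_ring_1^3)"
  unfolding det_2 by (simp add: Qform_def sym2_act_def power2_eq_square algebra_simps)

lemma sq_vec_sym2: "sq_vec (g *v e) = sym2_act g (sq_vec (e::'k::comm_ring_1^2))"
  by (simp add: vec_eq_iff forall_3 sq_vec_def sym2_act_def matrix_vector_mult_def sum_2 power2_eq_square algebra_simps)

lemma Qform_sq: "Qform (sq_vec (e::'k::comm_ring_1^2)) = 0"
  by (simp add: Qform_def sq_vec_def power2_eq_square algebra_simps)

lemma Mg_SO3: "g \<in> SL2 \<Longrightarrow> Mg g \<in> SO3"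
  by (simp add: SL2_def SO3_def det_Mg Mg_mult Qform_sym2)


lemma e_coord: "(\<lambda>x. fst x $ j) \<in> pfun (coords_W l)"
proof -
  have "(\<lambda>(e::'a^2, Q::nat \<Rightarrow> 'a^3). e $ j) \<in> coords_W l" unfolding coords_W_def by blast
  moreover have "(\<lambda>x::('a^2) \<times> (nat \<Rightarrow> 'a^3). fst x $ j) = (\<lambda>(e, Q). e $ j)" by auto
  ultimately show ?thesis using pf_coord by metis
qed

lemma Q_coord: "1 \<le> i \<Longrightarrow> i \<le> l \<Longrightarrow> (\<lambda>x. snd x i $ j) \<in> pfun (coords_W l)"
proof -
  assume "1 \<le> i" "i \<le> l"
  then have "(\<lambda>(e::'a^2, Q::nat \<Rightarrow> 'a^3). Q i $ j) \<in> coords_W l" unfolding coords_W_def by blast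
  moreover have "(\<lambda>x::('a^2) \<times> (nat \<Rightarrow> 'a^3). snd x i $ j) = (\<lambda>(e, Q). Q i $ j)" by auto
  ultimately show ?thesis using pf_coord by metis
qed

lemma phi_pfun:
  assumes "f \<in> pfun (coords_V l)"
  shows "(\<lambda>x. f (phi l x)) \<in> pfun (coords_W l)"
proof (rule pfun_comp[OF assms])
  fix c :: "(nat \<Rightarrow> 'a^3) \<Rightarrow> 'a" assume "c \<in> coords_V l"
  then obtain i j where c: "c = (\<lambda>v. v i $ j)" "i \<le> l" unfolding coords_V_def by blast
  show "(\<lambda>x. c (phi l x)) \<in> pfun (coords_W l)"
  proof (cases "i < l")
    case True
    then have "(\<lambda>x. c (phi l x)) = (\<lambda>x. snd x (Suc i) $ j)"
      by (auto simp: c phi_def case_prod_beta)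
    then show ?thesis using Q_coord[of "Suc i" l j] True by simp
  next
    case False
    then have eq: "(\<lambda>x. c (phi l x)) = (\<lambda>x. sq_vec (fst x) $ j)"
      by (auto simp: c phi_def case_prod_beta)
    have h0: "(\<lambda>x. fst x $ 0 ^ 2) \<in> pfun (coords_W l)" "(\<lambda>x. fst x $ 1 ^ 2) \<in> pfun (coords_W l)"
      using pfun_pow[OF e_coord] by auto
    have h1: "(\<lambda>x::('a^2) \<times> (nat \<Rightarrow> 'a^3). 2 * fst x $ 0 * fst x $ 1) \<in> pfun (coords_W l)"
      using pf_mult[OF pfun_mult_const[OF e_coord[of 0]] e_coord[of 1], of 2 l] by simp
    show ?thesis unfolding eq sq_vec_def using h0 h1 by (cases "j = 0"; cases "j = 1") auto
  qed
qed

lemma phi_equiv: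
  "phi l (g *v e, \<lambda>i. sym2_act g (Q i)) = (\<lambda>i. Mg g *v (phi l (e, Q) i))"
  by (auto simp: phi_def Mg_mult sq_vec_sym2)

lemma part1:
  assumes "f \<in> inv_SO3 l"
  shows "f \<circ> phi l \<in> inv_SL2 l"
proof -
  have fp: "f \<in> pfun (coords_V l)" and fi: "\<And>M v. M \<in> SO3 \<Longrightarrow> f (\<lambda>i. M *v v i) = f v"
    using assms unfolding inv_SO3_def by auto
  have "(\<lambda>x. f (phi l x)) \<in> pfun (coords_W l)" by (rule phi_pfun[OF fp])
  moreover have "(f \<circ> phi l) (g *v e, \<lambda>i. sym2_act g (Q i)) = (f \<circ> phi l) (e, Q)"
    if "g \<in> SL2" for g e Q
    using fi[OF Mg_SO3[OF that]] by (simp add: phi_equiv)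
  ultimately show ?thesis unfolding inv_SL2_def comp_def by auto
qed


definition mk2 :: "'k \<Rightarrow> 'k \<Rightarrow> 'k^2" where "mk2 x y = (\<chi> i. if i = 0 then x else y)"
lemma mk2_simps[simp]: "mk2 x y $ 0 = x" "mk2 x y $ 1 = y" by (simp_all add: mk2_def)

definition mk3 :: "'k \<Rightarrow> 'k \<Rightarrow> 'k \<Rightarrow> 'k^3" where
  "mk3 x y z = (\<chi> i. if i = 0 then x else if i = 1 then y else z)"
lemma mk3_simps[simp]: "mk3 x y z $ 0 = x" "mk3 x y z $ 1 = y" "mk3 x y z $ 2 = z" by (simp_all add: mk3_def)

lemma null_sq:
  assumes ac: "alg_closed TYPE('k::field_char_0)" and q: "Qform (w::'k^3) = 0"
  shows "\<exists>e. w = sq_vec e"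
proof -
  have b: "(w$1)^2 = 4 * w$0 * w$2" using q by (simp add: Qform_def)
  obtain s where s: "s^2 = w$0" using sqrt_exists[OF ac] by blast
  show ?thesis
  proof (cases "w$0 = 0")
    case True
    then have b0: "w$1 = 0" using b by simp
    obtain t where t: "t^2 = w$2" using sqrt_exists[OF ac] by blast
    have "w = sq_vec (mk2 0 t)"
      using True b0 t by (simp add: vec_eq_iff forall_3 sq_vec_def)
    then show ?thesis by blast
  next
    case False
    then have s0: "s \<noteq> 0" using s by auto
    have "w = sq_vec (mk2 s ((w$1) / (2 * s)))"
    proof -
      have "((w$1) / (2 * s))^2 = w$2"
        using b s s0 False by (simp add: power_divide field_simps power2_eq_square)
      then show ?thesis using s s0 by (simp add: vec_eq_iff forall_3 sq_vec_def field_simps)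
    qed
    then show ?thesis by blast
  qed
qed

lemma Mvec3: "(M::'k::comm_ring_1^3^3) *v mk3 a b c = mk3 (M$0$0*a + M$0$1*b + M$0$2*c) (M$1$0*a + M$1$1*b + M$1$2*c) (M$2$0*a + M$2$1*b + M$2$2*c)"
  by (simp add: vec_eq_iff forall_3 matrix_vector_mult_def sum_3 algebra_simps)

lemma Qmk3: "Qform (mk3 a b c) = b^2 - 4*a*c" by (simp add: Qform_def)


lemma surj_entries:
  fixes p0 p1 r0 r1 x0 x1 x2 :: "'k::field_char_0"
  assumes D: "p0*r1 - p1*r0 = 1"
   and Q1: "x1^2 - 4*x0*x2 = 1"
   and E1: "(2*p0*p1 + x1)^2 - 4*(p0^2 + x0)*(p1^2+x2) = 1"
   and E2: "(x1 + 2*r0*r1)^2 - 4*(x0 + r0^2)*(x2 + r1^2) = 1"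
   and det: "p0^2 * x1 * r1^2 + x0 * (2*r0*r1) * p1^2 + r0^2 * (2*p0*p1) * x2
           - p0^2 * (2*r0*r1) * x2 - x0 * (2*p0*p1) * r1^2 - r0^2 * x1 * p1^2 = 1"
  shows "x0 = p0*r0 \<and> x1 = p0*r1 + p1*r0 \<and> x2 = p1*r1"
proof -
  define y0 y1 y2 where "y0 = p0*r0" "y1 = p0*r1 + p1*r0" "y2 = p1*r1"
  have e1: "x0*p1^2 - x1*p0*p1 + x2*p0^2 = 0" using E1 Q1 by algebra
  have e2: "x0*r1^2 - x1*r0*r1 + x2*r0^2 = 0" using E2 Q1 by algebra
  have c01: "y0*x1 = y1*x0" using e1 e2 D unfolding y0_y1_y2_def by algebra
  have c02: "y0*x2 = y2*x0" using e1 e2 D unfolding y0_y1_y2_def by algebra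
  have c12: "y1*x2 = y2*x1" using e1 e2 D unfolding y0_y1_y2_def by algebra
  have Qy: "y1^2 - 4*y0*y2 = 1" using D unfolding y0_y1_y2_def by algebra
  define lam where "lam = x1*y1 - 2*x0*y2 - 2*x2*y0"
  have x0: "x0 = lam*y0" using c01 c02 c12 Qy unfolding lam_def by algebra
  have x1: "x1 = lam*y1" using c01 c02 c12 Qy unfolding lam_def by algebra
  have x2: "x2 = lam*y2" using c01 c02 c12 Qy unfolding lam_def by algebra
  have "lam = 1" using det x0 x1 x2 D unfolding y0_y1_y2_def by algebra
  then show ?thesis using x0 x1 x2 unfolding y0_y1_y2_def by simp
qed

lemma sq_vec_entries: "sq_vec e $ 0 = (e$0)^2" "sq_vec e $ 1 = 2*e$0*e$1" "sq_vec e $ 2 = (e$1)^2"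
  by (simp_all add: sq_vec_def)

lemma surj_SO3:
  assumes ac: "alg_closed TYPE('k::field_char_0)" and M: "(M::'k^3^3) \<in> SO3"
  shows "\<exists>g\<in>SL2. M = Mg g"
proof -
  have dM: "det M = 1" and QM: "\<And>v. Qform (M *v v) = Qform v" using M unfolding SO3_def by auto
  have q0: "Qform (mk3 (M$0$0) (M$1$0) (M$2$0)) = 0" using QM[of "mk3 1 0 0"] by (simp add: Mvec3 Qmk3)
  have q2: "Qform (mk3 (M$0$2) (M$1$2) (M$2$2)) = 0" using QM[of "mk3 0 0 1"] by (simp add: Mvec3 Qmk3)
  have q02: "(M$1$0 + M$1$2)^2 - 4*(M$0$0 + M$0$2)*(M$2$0 + M$2$2) = -4"
    using QM[of "mk3 1 0 1"] by (simp add: Mvec3 Qmk3)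
  have q1: "(M$1$1)^2 - 4*(M$0$1)*(M$2$1) = 1"
    using QM[of "mk3 0 1 0"] by (simp add: Mvec3 Qmk3)
  have q01: "(M$1$0 + M$1$1)^2 - 4*(M$0$0 + M$0$1)*(M$2$0 + M$2$1) = 1"
    using QM[of "mk3 1 1 0"] by (simp add: Mvec3 Qmk3)
  have q12: "(M$1$1 + M$1$2)^2 - 4*(M$0$1 + M$0$2)*(M$2$1 + M$2$2) = 1"
    using QM[of "mk3 0 1 1"] by (simp add: Mvec3 Qmk3)
  obtain p where p: "mk3 (M$0$0) (M$1$0) (M$2$0) = sq_vec p" using null_sq[OF ac q0] by blast
  obtain q where q: "mk3 (M$0$2) (M$1$2) (M$2$2) = sq_vec q" using null_sq[OF ac q2] by blast
  have pe: "M$0$0 = (p$0)^2" "M$1$0 = 2*p$0*p$1" "M$2$0 = (p$1)^2"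
    using arg_cong[OF p, of "\<lambda>v. v$0"] arg_cong[OF p, of "\<lambda>v. v$1"] arg_cong[OF p, of "\<lambda>v. v$2"]
    by (simp_all add: sq_vec_entries)
  have qe: "M$0$2 = (q$0)^2" "M$1$2 = 2*q$0*q$1" "M$2$2 = (q$1)^2"
    using arg_cong[OF q, of "\<lambda>v. v$0"] arg_cong[OF q, of "\<lambda>v. v$1"] arg_cong[OF q, of "\<lambda>v. v$2"]
    by (simp_all add: sq_vec_entries)
  define D where "D = p$0*q$1 - p$1*q$0"
  have D2: "D^2 = 1" using q02 unfolding pe qe D_def by algebra
  define r0 r1 where "r0 = D*q$0" "r1 = D*q$1"
  have re: "M$0$2 = r0^2" "M$1$2 = 2*r0*r1" "M$2$2 = r1^2"
    using D2 qe unfolding r0_r1_def by algebra+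
  have Dr: "p$0*r1 - p$1*r0 = 1" using D2 unfolding r0_r1_def D_def by algebra
  have dd: "det M = M$1$1*M$2$2*M$0$0 + M$1$2*M$2$0*M$0$1 + M$1$0*M$2$1*M$0$2
      - M$1$1*M$2$0*M$0$2 - M$1$2*M$2$1*M$0$0 - M$1$0*M$2$2*M$0$1"
    unfolding det_3 by simp
  have "M$0$1 = p$0*r0 \<and> M$1$1 = p$0*r1 + p$1*r0 \<and> M$2$1 = p$1*r1"
  proof (rule surj_entries[OF Dr q1])
    show "(2 * p$0 * p$1 + M$1$1)^2 - 4 * ((p$0)^2 + M$0$1) * ((p$1)^2 + M$2$1) = 1"
      using q01 unfolding pe by simp
    show "(M$1$1 + 2 * r0 * r1)^2 - 4 * (M$0$1 + r0^2) * (M$2$1 + r1^2) = 1"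
      using q12 unfolding re by simp
    show "(p$0)^2 * M$1$1 * r1^2 + M$0$1 * (2 * r0 * r1) * (p$1)^2 + r0^2 * (2 * p$0 * p$1) * M$2$1 -
      (p$0)^2 * (2 * r0 * r1) * M$2$1 - M$0$1 * (2 * p$0 * p$1) * r1^2 - r0^2 * M$1$1 * (p$1)^2 = 1"
      using dM unfolding dd pe re by algebra
  qed
  then have xe: "M$0$1 = p$0*r0" "M$1$1 = p$0*r1 + p$1*r0" "M$2$1 = p$1*r1" by auto
  define g :: "'k^2^2" where "g = (\<chi> i j. if j = 0 then p$i else (if i = 0 then r0 else r1))"
  have ge: "g$0$0 = p$0" "g$1$0 = p$1" "g$0$1 = r0" "g$1$1 = r1" by (simp_all add: g_def)
  have "det g = 1" unfolding det_2 using Dr by (simp add: g_def algebra_simps)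
  moreover have "M = Mg g"
    by (simp add: vec_eq_iff forall_3 Mg_def ge pe re xe algebra_simps)
  ultimately show ?thesis unfolding SL2_def by blast
qed


lemma pfun_mono: "C \<subseteq> C' \<Longrightarrow> f \<in> pfun C \<Longrightarrow> f \<in> pfun C'"
  using pfun_comp[of f C "\<lambda>x. x" C'] by (auto intro: pf_coord)

lemma V_coord: "i \<le> l \<Longrightarrow> (\<lambda>v. v i $ j) \<in> pfun (coords_V l)"
  by (rule pf_coord) (auto simp: coords_V_def)

definition Cb :: "nat \<Rightarrow> ((nat \<Rightarrow> 'k ^ 3) \<Rightarrow> 'k) set" where
  "Cb l = {(\<lambda>v. v i $ j) | i j. i \<le> l \<and> (i \<noteq> l \<or> j \<noteq> 1)}"

lemma Cb_sub: "Cb l \<subseteq> coords_V l" unfolding Cb_def coords_V_def by blast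

lemma Cb_coord: "i \<le> l \<Longrightarrow> (i \<noteq> l \<or> j \<noteq> 1) \<Longrightarrow> (\<lambda>v. v i $ j) \<in> pfun (Cb l)"
  by (rule pf_coord) (auto simp: Cb_def)

lemma dlast_pfun: "dlast l \<in> pfun (coords_V l)"
proof -
  have "dlast l = (\<lambda>v. (v l $ 1)^2 - 4 * (v l $ 0 * v l $ 2))"
    by (auto simp: dlast_def Qform_def)
  also have "\<dots> \<in> pfun (coords_V l)"
    by (intro pfun_diff pfun_pow pfun_mult_const pf_mult V_coord) auto
  finally show ?thesis .
qed

lemma division:
  assumes "f \<in> pfun (coords_V l)"
  shows "\<exists>R0 R1 H. R0 \<in> pfun (Cb l) \<and> R1 \<in> pfun (Cb l) \<and> H \<in> pfun (coords_V l) \<and>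
     (\<forall>v. f v = R0 v + v l $ 1 * R1 v + dlast l v * (H v :: 'k::comm_ring_1))"
  using assms
proof induction
  case (pf_const c)
  show ?case by (rule exI[of _ "\<lambda>_. c"], rule exI[of _ "\<lambda>_. 0"], rule exI[of _ "\<lambda>_. 0"]) (auto intro: pfun.pf_const)
next
  case (pf_coord x)
  then obtain i j where x: "x = (\<lambda>v. v i $ j)" "i \<le> l" unfolding coords_V_def by blast
  show ?case
  proof (cases "i = l \<and> j = 1")
    case True
    show ?thesis by (rule exI[of _ "\<lambda>_. 0"], rule exI[of _ "\<lambda>_. 1"], rule exI[of _ "\<lambda>_. 0"])
      (auto intro: pfun.pf_const simp: x True)
  next
    case False
    show ?thesis by (rule exI[of _ x], rule exI[of _ "\<lambda>_. 0"], rule exI[of _ "\<lambda>_. 0"])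
      (use False x in \<open>auto intro: pfun.pf_const Cb_coord\<close>)
  qed
next
  case (pf_add f g)
  then obtain R0 R1 H S0 S1 K where h: "R0 \<in> pfun (Cb l)" "R1 \<in> pfun (Cb l)" "H \<in> pfun (coords_V l)"
    "\<forall>v. f v = R0 v + v l $ 1 * R1 v + dlast l v * H v"
    "S0 \<in> pfun (Cb l)" "S1 \<in> pfun (Cb l)" "K \<in> pfun (coords_V l)"
    "\<forall>v. g v = S0 v + v l $ 1 * S1 v + dlast l v * K v" by metis
  show ?case
    by (rule exI[of _ "\<lambda>v. R0 v + S0 v"], rule exI[of _ "\<lambda>v. R1 v + S1 v"], rule exI[of _ "\<lambda>v. H v + K v"])
      (use h in \<open>auto intro: pfun.pf_add simp: algebra_simps\<close>)
next
  case (pf_mult f g)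
  then obtain R0 R1 H S0 S1 K where h: "R0 \<in> pfun (Cb l)" "R1 \<in> pfun (Cb l)" "H \<in> pfun (coords_V l)"
    "\<forall>v. f v = R0 v + v l $ 1 * R1 v + dlast l v * H v"
    "S0 \<in> pfun (Cb l)" "S1 \<in> pfun (Cb l)" "K \<in> pfun (coords_V l)"
    "\<forall>v. g v = S0 v + v l $ 1 * S1 v + dlast l v * K v" by metis
  have a: "(\<lambda>v. v l $ 0) \<in> pfun (Cb l)" "(\<lambda>v. v l $ 2) \<in> pfun (Cb l)" by (auto intro: Cb_coord)
  have b: "(\<lambda>v. v l $ 1) \<in> pfun (coords_V l)" by (auto intro: V_coord)
  have R0s: "R0 \<in> pfun (coords_V l)" "R1 \<in> pfun (coords_V l)" "S1 \<in> pfun (coords_V l)"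
    using h pfun_mono[OF Cb_sub] by auto
  show ?case
  proof (rule exI[of _ "\<lambda>v. R0 v * S0 v + 4 * (v l $ 0 * v l $ 2) * (R1 v * S1 v)"],
      rule exI[of _ "\<lambda>v. R0 v * S1 v + R1 v * S0 v"],
      rule exI[of _ "\<lambda>v. R1 v * S1 v + H v * g v + (R0 v + v l $ 1 * R1 v) * K v"], intro conjI)
    show "(\<lambda>v. R0 v * S0 v + 4 * (v l $ 0 * v l $ 2) * (R1 v * S1 v)) \<in> pfun (Cb l)"
      using h a by (intro pfun.pf_add pfun.pf_mult pfun_mult_const) auto
    show "(\<lambda>v. R0 v * S1 v + R1 v * S0 v) \<in> pfun (Cb l)"
      using h by (intro pfun.pf_add pfun.pf_mult) auto
    show "(\<lambda>v. R1 v * S1 v + H v * g v + (R0 v + v l $ 1 * R1 v) * K v) \<in> pfun (coords_V l)"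
      using h(3,7) R0s b pf_mult.hyps by (intro pfun.pf_add pfun.pf_mult) auto
    show "\<forall>v. f v * g v = R0 v * S0 v + 4 * (v l $ 0 * v l $ 2) * (R1 v * S1 v) +
        v l $ 1 * (R0 v * S1 v + R1 v * S0 v) +
        dlast l v * (R1 v * S1 v + H v * g v + (R0 v + v l $ 1 * R1 v) * K v)"
    proof
      fix v
      show "f v * g v = R0 v * S0 v + 4 * (v l $ 0 * v l $ 2) * (R1 v * S1 v) +
        v l $ 1 * (R0 v * S1 v + R1 v * S0 v) +
        dlast l v * (R1 v * S1 v + H v * g v + (R0 v + v l $ 1 * R1 v) * K v)"
        unfolding h(4)[rule_format, of v] h(8)[rule_format, of v] dlast_def Qform_def
        by (simp add: algebra_simps power2_eq_square)
    qed
  qed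
qed

definition vupd :: "(nat \<Rightarrow> 'k^3) \<Rightarrow> nat \<Rightarrow> 3 \<Rightarrow> 'k \<Rightarrow> (nat \<Rightarrow> 'k^3)" where
  "vupd v i0 j0 t = v(i0 := (\<chi> j. if j = j0 then t else v i0 $ j))"

lemma vupd_nth: "vupd v i0 j0 t i $ j = (if i = i0 \<and> j = j0 then t else v i $ j)"
  by (simp add: vupd_def)

lemma vupd_same: "vupd v i0 j0 (v i0 $ j0) = v"
  by (auto simp: fun_eq_iff vec_eq_iff vupd_nth)

lemma line_V:
  assumes "f \<in> pfun (coords_V l)"
  shows "\<exists>p. \<forall>t. f (vupd v i0 j0 t) = poly p t"
proof (rule pfun_line[OF assms])
  fix c :: "(nat \<Rightarrow> 'a^3) \<Rightarrow> 'a" assume "c \<in> coords_V l"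
  then obtain i j where c: "c = (\<lambda>v. v i $ j)" unfolding coords_V_def by blast
  show "\<exists>p. \<forall>t. c (vupd v i0 j0 t) = poly p t"
  proof (cases "i = i0 \<and> j = j0")
    case True then show ?thesis by (intro exI[of _ "[:0,1:]"]) (simp add: c vupd_nth)
  next
    case False then show ?thesis by (intro exI[of _ "[:v i $ j:]"]) (use False in \<open>auto simp add: c vupd_nth\<close>)
  qed
qed

lemma Cb_local: "R \<in> pfun (Cb l) \<Longrightarrow> R (vupd v l 1 t) = R v"
  by (erule pfun_local) (auto simp: Cb_def vupd_nth)

lemma vanish_on_cone:
  assumes ac: "alg_closed TYPE('k::field_char_0)" and f: "f \<in> pfun (coords_V l)"
    and z: "\<And>x. f (phi l x) = 0" and d: "dlast l (v :: nat \<Rightarrow> 'k^3) = 0"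
  shows "f v = 0"
proof -
  obtain e where e: "v l = sq_vec e" using null_sq[OF ac] d unfolding dlast_def by blast
  have "f v = f (phi l (e, \<lambda>i. v (i - 1)))"
  proof (rule pfun_local[OF f])
    fix c :: "(nat \<Rightarrow> 'k^3) \<Rightarrow> 'k" assume "c \<in> coords_V l"
    then obtain i j where c: "c = (\<lambda>v. v i $ j)" "i \<le> l" unfolding coords_V_def by blast
    show "c v = c (phi l (e, \<lambda>i. v (i - 1)))"
      using c e by (cases "i < l") (auto simp: phi_def)
  qed
  then show ?thesis using z by simp
qed

lemma part3_fw:
  assumes ac: "alg_closed TYPE('k::field_char_0)" and f: "f \<in> inv_SO3 l"
    and z: "f \<circ> phi l = (\<lambda>_. 0)"
  shows "\<exists>h\<in>inv_SO3 l. f = (\<lambda>v. dlast l v * (h v :: 'k))"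
proof -
  have fp: "f \<in> pfun (coords_V l)" and fi: "\<And>M v. M \<in> SO3 \<Longrightarrow> f (\<lambda>i. M *v v i) = f v"
    using f unfolding inv_SO3_def by auto
  have z': "\<And>x. f (phi l x) = 0" using z by (metis comp_apply)
  obtain R0 R1 H where R: "R0 \<in> pfun (Cb l)" "R1 \<in> pfun (Cb l)" "H \<in> pfun (coords_V l)"
     "\<And>v. f v = R0 v + v l $ 1 * R1 v + dlast l v * H v"
    using division[OF fp] by metis
  have key: "R0 v = 0 \<and> (\<forall>s. s^2 = v l $ 0 * v l $ 2 \<longrightarrow> s * R1 v = 0)" for v
  proof -
    obtain s where s: "s^2 = v l $ 0 * v l $ 2" using sqrt_exists[OF ac] by blast
    have *: "R0 v + u * R1 v = 0" if "u^2 = 4 * (v l $ 0 * v l $ 2)" for u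
    proof -
      have "dlast l (vupd v l 1 u) = 0" using that by (simp add: dlast_def Qform_def vupd_nth)
      then have "f (vupd v l 1 u) = 0" by (rule vanish_on_cone[OF ac fp z'])
      then show ?thesis using R(4)[of "vupd v l 1 u"] Cb_local[OF R(1)] Cb_local[OF R(2)]
        \<open>dlast l (vupd v l 1 u) = 0\<close> by (simp add: vupd_nth)
    qed
    have a: "R0 v + 2 * s * R1 v = 0" using *[of "2 * s"] s by (simp add: power_mult_distrib)
    have b: "R0 v - 2 * s * R1 v = 0" using *[of "- 2 * s"] s by (simp add: power_mult_distrib)
    have "R0 v = 0" using a b by (simp add: algebra_simps)
    moreover have "s' * R1 v = 0" if "s'^2 = v l $ 0 * v l $ 2" for s'
      using *[of "2 * s'"] that \<open>R0 v = 0\<close> by (simp add: power_mult_distrib)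
    ultimately show ?thesis by blast
  qed
  have R1c: "R1 v = 0" if "v l $ 2 \<noteq> 0" for v
  proof -
    obtain p where p: "\<forall>t. R1 (vupd v l 0 t) = poly p t"
      using line_V[OF pfun_mono[OF Cb_sub R(2)]] by blast
    have "p = 0"
    proof (rule poly_zero_cofinite[of "{0}"])
      fix t :: 'k assume "t \<notin> {0}"
      obtain s where s: "s^2 = t * v l $ 2" using sqrt_exists[OF ac] by blast
      then have "s \<noteq> 0" using \<open>t \<notin> {0}\<close> that by auto
      moreover have "s * R1 (vupd v l 0 t) = 0" using key[of "vupd v l 0 t"] s by (simp add: vupd_nth)
      ultimately show "poly p t = 0" using p by simp
    qed simp
    then show ?thesis using p vupd_same[of v l 0] by (metis poly_0)
  qed
  have R1z: "R1 v = 0" for v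
  proof -
    obtain p where p: "\<forall>t. R1 (vupd v l 2 t) = poly p t"
      using line_V[OF pfun_mono[OF Cb_sub R(2)]] by blast
    have "p = 0"
    proof (rule poly_zero_cofinite[of "{0}"])
      fix t :: 'k assume "t \<notin> {0}"
      then show "poly p t = 0" using p R1c[of "vupd v l 2 t"] by (simp add: vupd_nth)
    qed simp
    then show ?thesis using p vupd_same[of v l 2] by (metis poly_0)
  qed
  have fH: "f = (\<lambda>v. dlast l v * H v)"
    using R(4) key R1z by (auto simp: fun_eq_iff)
  have "H (\<lambda>i. M *v v i) = H v" if M: "M \<in> SO3" for M v
  proof -
    define K where "K = (\<lambda>v. H (\<lambda>i. M *v v i) - H v)"
    have Kp: "K \<in> pfun (coords_V l)" unfolding K_def
    proof (intro pfun_diff R(3) pfun_comp[OF R(3)])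
      fix c :: "(nat \<Rightarrow> 'k^3) \<Rightarrow> 'k" assume "c \<in> coords_V l"
      then obtain i j where c: "c = (\<lambda>v. v i $ j)" "i \<le> l" unfolding coords_V_def by blast
      have "(\<lambda>v. c (\<lambda>i. M *v v i)) = (\<lambda>v. \<Sum>k\<in>UNIV. M $ j $ k * v i $ k)"
        by (simp add: c matrix_vector_mult_def)
      also have "\<dots> \<in> pfun (coords_V l)"
        by (intro pfun_sum pfun_mult_const V_coord c(2)) auto
      finally show "(\<lambda>v. c (\<lambda>i. M *v v i)) \<in> pfun (coords_V l)" .
    qed
    have dM: "dlast l (\<lambda>i. M *v v i) = dlast l v" for v
      using M unfolding SO3_def dlast_def by auto
    have K0: "K v = 0" if "dlast l v \<noteq> 0" for v
    proof -
      have "dlast l v * H (\<lambda>i. M *v v i) = dlast l v * H v"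
        using fi[OF M, of v] fH dM[of v] by metis
      then show ?thesis using that by (simp add: K_def)
    qed
    obtain p where p: "\<forall>t. K (vupd v l 1 t) = poly p t" using line_V[OF Kp] by blast
    have "p = 0"
    proof (rule poly_zero_cofinite[of "{t. poly [:- 4 * (v l $ 0 * v l $ 2), 0, 1:] t = 0}"])
      show "finite {t. poly [:- 4 * (v l $ 0 * v l $ 2), 0, 1:] t = 0}"
        by (rule poly_roots_finite) simp
      fix t assume "t \<notin> {t. poly [:- 4 * (v l $ 0 * v l $ 2), 0, 1:] t = 0}"
      then have "dlast l (vupd v l 1 t) \<noteq> 0"
        by (simp add: dlast_def Qform_def vupd_nth power2_eq_square algebra_simps)
      then show "poly p t = 0" using p K0 by metis
    qed
    then show ?thesis using p vupd_same[of v l 1] unfolding K_def by (metis poly_0 right_minus_eq)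
  qed
  then have "H \<in> inv_SO3 l" using R(3) unfolding inv_SO3_def by auto
  then show ?thesis using fH by blast
qed

lemma part3_bw:
  assumes "f = (\<lambda>v. dlast l v * (h v :: 'k::comm_ring_1))"
  shows "f \<circ> phi l = (\<lambda>_. 0)"
  using assms by (auto simp: fun_eq_iff dlast_def phi_def Qform_sq)


definition hev :: "nat \<Rightarrow> 'k::comm_ring_1 poly \<Rightarrow> 'k^2 \<Rightarrow> 'k" where
  "hev n p u = (\<Sum>j\<le>n. coeff p j * u$0^(n-j) * u$1^j)"

lemma poly_upto:
  fixes p :: "'k::comm_ring_1 poly"
  assumes "degree p \<le> n"
  shows "poly p x = (\<Sum>i\<le>n. coeff p i * x ^ i)"
  unfolding poly_altdef
  by (rule sum.mono_neutral_left) (use assms in \<open>auto simp: coeff_eq_0\<close>)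

lemma hev_char:
  fixes p :: "'k::field poly"
  assumes "degree p \<le> n"
  shows "hev n p u = (if u$0 = 0 then coeff p n * u$1^n else u$0^n * poly p (u$1/u$0))"
proof (cases "u$0 = 0")
  case True
  have "hev n p u = (\<Sum>j\<le>n. if j = n then coeff p n * u$1^n else 0)"
    unfolding hev_def by (rule sum.cong) (auto simp: True)
  then show ?thesis using True by simp
next
  case False
  have "u$0^n * poly p (u$1/u$0) = (\<Sum>j\<le>n. coeff p j * (u$0^n * (u$1/u$0)^j))"
    unfolding poly_upto[OF assms] by (simp add: sum_distrib_left algebra_simps)
  also have "\<dots> = hev n p u" unfolding hev_def
  proof (rule sum.cong)
    fix j assume "j \<in> {..n}"
    then have "u$0^n = u$0^(n-j) * u$0^j" by (simp add: power_add[symmetric])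
    then show "coeff p j * (u$0^n * (u$1/u$0)^j) = coeff p j * u$0^(n-j) * u$1^j"
      using False by (simp add: power_divide)
  qed simp
  finally show ?thesis using False by simp
qed

lemma hev_add: "hev n (p + q) u = hev n p u + hev n q u"
  by (simp add: hev_def sum.distrib algebra_simps)

lemma hev_smult: "hev n (smult a p) u = a * hev n p u"
  by (simp add: hev_def sum_distrib_left algebra_simps)

lemma hev_zero[simp]: "hev n 0 u = 0" by (simp add: hev_def)

lemma hev_sum: "finite A \<Longrightarrow> hev n (\<Sum>i\<in>A. p i) u = (\<Sum>i\<in>A. hev n (p i) u)"
  by (induction A rule: finite_induct) (auto simp: hev_add)

lemma coeff_mult_top:
  fixes p q :: "'k::comm_ring_1 poly"
  assumes "degree p \<le> n" "degree q \<le> m"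
  shows "coeff (p * q) (n + m) = coeff p n * coeff q m"
proof -
  have "coeff (p * q) (n + m) = (\<Sum>i\<le>n+m. if i = n then coeff p n * coeff q m else 0)"
    unfolding coeff_mult
  proof (rule sum.cong)
    fix i assume "i \<in> {..n+m}"
    show "coeff p i * coeff q (n + m - i) = (if i = n then coeff p n * coeff q m else 0)"
    proof (cases "i < n")
      case True then have "n + m - i > degree q" using assms by auto
      then show ?thesis using True by (simp add: coeff_eq_0)
    next
      case False
      show ?thesis
      proof (cases "i = n")
        case False2: False
        with False have "i > degree p" using assms by auto
        then show ?thesis using False2 by (simp add: coeff_eq_0)
      qed simp
    qed
  qed simp
  then show ?thesis by simp
qed

lemma hev_mult:
  fixes p q :: "'k::field poly"
  assumes "degree p \<le> n" "degree q \<le> m"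
  shows "hev (n + m) (p * q) u = hev n p u * hev m q u"
proof -
  have d: "degree (p * q) \<le> n + m" using degree_mult_le[of p q] assms by linarith
  show ?thesis
    unfolding hev_char[OF d] hev_char[OF assms(1)] hev_char[OF assms(2)]
    using coeff_mult_top[OF assms] by (simp add: power_add)
qed

lemma hev_power:
  fixes p :: "'k::field poly"
  assumes "degree p \<le> m"
  shows "hev (m * k) (p ^ k) u = hev m p u ^ k"
proof (induction k)
  case 0 then show ?case by (simp add: hev_def)
next
  case (Suc k)
  have dk: "degree (p ^ k) \<le> m * k" using degree_power_le[of p k] assms
    by (metis le_trans mult.commute mult_le_mono1)
  have "hev (m * Suc k) (p ^ Suc k) u = hev (m + m * k) (p * p ^ k) u" by simp
  also have "\<dots> = hev m p u * hev (m * k) (p ^ k) u" by (rule hev_mult[OF assms dk])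
  finally show ?case using Suc by simp
qed

lemma hev_scale: "hev n p (t *s u) = t^n * hev n p u"
  unfolding hev_def sum_distrib_left
proof (rule sum.cong)
  fix j assume "j \<in> {..n}"
  then have "t^n = t^(n-j) * t^j" by (simp add: power_add[symmetric])
  then show "coeff p j * ((t *s u)$0)^(n-j) * ((t *s u)$1)^j = t^n * (coeff p j * u$0^(n-j) * u$1^j)"
    by (simp add: power_mult_distrib algebra_simps)
qed simp

lemma hev_11: "hev n p (mk2 1 t) = poly p t" if "degree p \<le> (n::nat)" for p :: "'k::field poly"
  using hev_char[OF that] by simp

lemma hev_unique:
  fixes p q :: "'k::field_char_0 poly"
  assumes "degree p \<le> n" "degree q \<le> n" "\<And>u. hev n p u = hev n q u"
  shows "p = q"
  by (rule poly_ext) (metis hev_11 assms)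

lemma hev_lin: "hev 1 [:a, b:] u = a * u$0 + b * u$1"
  by (simp add: hev_def)

lemma hev_const: "hev 0 [:c:] u = c"
  by (simp add: hev_def)


lemma lin_pow_coeff:
  fixes a b :: "'k::comm_ring_1"
  shows "coeff ([:a, b:] ^ m) j = of_nat (m choose j) * a^(m-j) * b^j"
proof (induction m arbitrary: j)
  case 0 then show ?case by (cases j) auto
next
  case (Suc m)
  note IH = Suc.IH
  have eq: "[:a, b:] ^ Suc m = smult a ([:a, b:] ^ m) + pCons 0 (smult b ([:a, b:] ^ m))"
    by (simp add: mult_pCons_left)
  show ?case
  proof (cases j)
    case 0 then show ?thesis unfolding eq by (simp add: IH)
  next
    case (Suc j')
    have t1: "a * (of_nat (m choose Suc j') * a^(m - Suc j')) = of_nat (m choose Suc j') * a^(m - j')"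
    proof (cases "Suc j' \<le> m")
      case True then have mj: "m - j' = Suc (m - Suc j')" by simp
      show ?thesis by (simp only: mj power_Suc mult.left_commute)
    next
      case False then show ?thesis by (simp add: binomial_eq_0)
    qed
    have "coeff ([:a, b:] ^ Suc m) j = a * (of_nat (m choose Suc j') * a^(m - Suc j') * b^Suc j')
        + b * (of_nat (m choose j') * a^(m-j') * b^j')"
      unfolding eq by (simp add: IH \<open>j = Suc j'\<close>)
    also have "\<dots> = (of_nat (m choose Suc j') + of_nat (m choose j')) * a^(m - j') * b^Suc j'"
      using arg_cong[OF t1, of "\<lambda>x. x * b^Suc j'"] by (simp only: distrib_right distrib_left mult.assoc mult.left_commute power_Suc)
    also have "\<dots> = of_nat (Suc m choose j) * a^(Suc m - j) * b^j"
    proof -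
      have "Suc m choose j = (m choose Suc j') + (m choose j')" using \<open>j = Suc j'\<close> by simp
      then have e1: "(of_nat (m choose Suc j') + of_nat (m choose j') :: 'k) = of_nat (Suc m choose j)" by simp
      have e2: "m - j' = Suc m - j" using \<open>j = Suc j'\<close> by simp
      have e3: "Suc j' = j" using \<open>j = Suc j'\<close> by simp
      show ?thesis by (subst e1, subst e2, simp only: e3)
    qed
    finally show ?thesis .
  qed
qed

definition act :: "nat \<Rightarrow> 'k::comm_ring_1^2^2 \<Rightarrow> 'k poly \<Rightarrow> 'k poly" where
  "act n g r = (\<Sum>j\<le>n. smult (coeff r j) ([:g$0$0, g$1$0:]^(n-j) * [:g$0$1, g$1$1:]^j))"

definition gt :: "'k::comm_ring_1^2^2 \<Rightarrow> 'k^2 \<Rightarrow> 'k^2" where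
  "gt g u = mk2 (g$0$0 * u$0 + g$1$0 * u$1) (g$0$1 * u$0 + g$1$1 * u$1)"

lemma degree_lin_pow: "degree ([:a, b:] ^ m) \<le> m"
proof -
  have "degree [:a, b:] \<le> 1" by simp
  then have "degree [:a, b:] * m \<le> m" using mult_le_mono1[of "degree [:a,b:]" 1 m] by simp
  then show ?thesis using degree_power_le[of "[:a,b:]" m] by linarith
qed

lemma degree_act: "degree (act n g r) \<le> n"
  unfolding act_def
proof (rule degree_sum_le)
  fix j assume j: "j \<in> {..n}"
  have "degree ([:g$0$0, g$1$0:]^(n-j) * [:g$0$1, g$1$1:]^j) \<le> n"
    using degree_mult_le[of "[:g$0$0, g$1$0:]^(n-j)" "[:g$0$1, g$1$1:]^j"]
      degree_lin_pow[of "g$0$0" "g$1$0" "n-j"] degree_lin_pow[of "g$0$1" "g$1$1" j] j by simp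
  then show "degree (smult (coeff r j) ([:g$0$0, g$1$0:]^(n-j) * [:g$0$1, g$1$1:]^j)) \<le> n"
    using degree_smult_le le_trans by blast
qed simp

lemma hev_lin1: "hev (Suc 0) [:a, b:] u = a * u$0 + b * u$1"
  by (simp add: hev_def)

lemma hev_lin_pow: "hev m ([:a, b:] ^ m) u = (a * u$0 + b * u$1) ^ m"
  for a b :: "'k::field"
proof -
  have "degree [:a, b:] \<le> 1" by simp
  from hev_power[OF this, of m u] show ?thesis by (simp add: hev_lin1)
qed

lemma act_term:
  fixes g :: "'k::field^2^2"
  assumes "j \<le> n"
  shows "hev n ([:g$0$0, g$1$0:]^(n-j) * [:g$0$1, g$1$1:]^j) u
     = (g$0$0 * u$0 + g$1$0 * u$1)^(n-j) * (g$0$1 * u$0 + g$1$1 * u$1)^j"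
proof -
  have "hev n ([:g$0$0, g$1$0:]^(n-j) * [:g$0$1, g$1$1:]^j) u
     = hev ((n-j) + j) ([:g$0$0, g$1$0:]^(n-j) * [:g$0$1, g$1$1:]^j) u" using assms by simp
  also have "\<dots> = hev (n-j) ([:g$0$0, g$1$0:]^(n-j)) u * hev j ([:g$0$1, g$1$1:]^j) u"
    by (rule hev_mult) (rule degree_lin_pow)+
  finally show ?thesis by (simp add: hev_lin_pow)
qed

lemma act_hev:
  fixes g :: "'k::field^2^2"
  shows "hev n (act n g r) u = hev n r (gt g u)"
proof -
  have "hev n (act n g r) u = (\<Sum>j\<le>n. coeff r j * hev n ([:g$0$0, g$1$0:]^(n-j) * [:g$0$1, g$1$1:]^j) u)"
    unfolding act_def by (simp add: hev_sum hev_smult)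
  also have "\<dots> = (\<Sum>j\<le>n. coeff r j * (gt g u)$0^(n-j) * (gt g u)$1^j)"
    by (intro sum.cong refl) (simp add: act_term gt_def)
  also have "\<dots> = hev n r (gt g u)" unfolding hev_def ..
  finally show ?thesis .
qed


definition pw :: "'k::comm_ring_1^3 \<Rightarrow> 'k poly" where "pw w = [: w$0, w$1, w$2 :]"

lemma degree_pw: "degree (pw w) \<le> 2"
  by (simp add: pw_def)

lemma hev2: "hev 2 p u = coeff p 0 * u$0^2 + coeff p 1 * u$0 * u$1 + coeff p 2 * u$1^2"
  by (simp add: hev_def numeral_2_eq_2 power2_eq_square)

lemma hev_pw: "hev 2 (pw w) u = w$0 * u$0^2 + w$1 * u$0 * u$1 + w$2 * u$1^2"
  unfolding hev2 by (simp add: pw_def numeral_2_eq_2)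

lemma gt_nth: "gt g u $ 0 = g$0$0 * u$0 + g$1$0 * u$1" "gt g u $ 1 = g$0$1 * u$0 + g$1$1 * u$1"
  by (simp_all add: gt_def)

lemma act_pw:
  fixes g :: "'k::field_char_0^2^2"
  shows "act 2 g (pw w) = pw (sym2_act g w)"
proof (rule hev_unique[OF degree_act degree_pw])
  fix u
  show "hev 2 (act 2 g (pw w)) u = hev 2 (pw (sym2_act g w)) u"
    unfolding act_hev hev_pw gt_nth by (simp add: sym2_act_def power2_eq_square algebra_simps)
qed

lemma act_pow:
  fixes g :: "'k::field_char_0^2^2"
  assumes "degree r \<le> 2"
  shows "act (2*k) g (r^k) = (act 2 g r)^k"
proof (rule hev_unique[OF degree_act])
  show "degree (act 2 g r ^ k) \<le> 2 * k"
    using degree_power_le[of "act 2 g r" k] degree_act[of 2 g r]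
    by (metis le_trans mult_le_mono1)
  fix u
  show "hev (2*k) (act (2*k) g (r^k)) u = hev (2*k) ((act 2 g r)^k) u"
    unfolding act_hev hev_power[OF assms] hev_power[OF degree_act] ..
qed

lemma mv2: "(g *v e) $ i = g$i$0 * e$0 + g$i$1 * (e::'k::comm_ring_1^2)$1"
  by (simp add: matrix_vector_mult_def sum_2 add.commute)

lemma act_lin:
  fixes g :: "'k::field_char_0^2^2"
  shows "act n g ([:e$0, e$1:]^n) = [:(g *v e)$0, (g *v e)$1:]^n"
proof (rule hev_unique[OF degree_act degree_lin_pow])
  fix u
  show "hev n (act n g ([:e$0, e$1:]^n)) u = hev n ([:(g *v e)$0, (g *v e)$1:]^n) u"
    unfolding act_hev hev_lin_pow gt_nth mv2 by (simp add: algebra_simps)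
qed

lemma pw_sq: "pw (sq_vec e) = [:e$0, e$1:]^2"
  by (simp add: pw_def sq_vec_def power2_eq_square mult_pCons_left algebra_simps)

definition Lam :: "(nat \<Rightarrow> (nat \<Rightarrow> 'k^3) \<Rightarrow> 'k poly) \<Rightarrow> nat \<Rightarrow> (nat \<Rightarrow> 'k^3) \<Rightarrow> 'k::field poly \<Rightarrow> 'k" where
  "Lam c k Q r = (\<Sum>j\<le>2*k. inverse (of_nat ((2*k) choose j)) * (coeff (c (2*k) Q) j * coeff r j))"

lemma Lam_lin:
  fixes c :: "nat \<Rightarrow> (nat \<Rightarrow> 'k::field_char_0^3) \<Rightarrow> 'k poly"
  shows "Lam c k Q ([:e$0, e$1:]^(2*k)) = hev (2*k) (c (2*k) Q) e"
  unfolding Lam_def hev_def lin_pow_coeff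
proof (rule sum.cong)
  fix j assume "j \<in> {..2*k}"
  then have "of_nat ((2*k) choose j) \<noteq> (0::'k)" by simp
  then show "inverse (of_nat ((2*k) choose j)) * (coeff (c (2*k) Q) j * (of_nat ((2*k) choose j) * e$0^(2*k-j) * e$1^j))
     = coeff (c (2*k) Q) j * e$0^(2*k-j) * e$1^j"
    by (simp add: field_simps)
qed simp


definition Bp :: "'k::comm_ring_1^2^2 \<Rightarrow> nat \<Rightarrow> nat \<Rightarrow> 'k poly" where
  "Bp g n i = [:g$0$0, g$1$0:]^(n-i) * [:g$0$1, g$1$1:]^i"

lemma coeff_act: "coeff (act n g r) j = (\<Sum>i\<le>n. coeff r i * coeff (Bp g n i) j)"
  by (simp add: act_def coeff_sum Bp_def)

lemma Lam_act_form:
  "Lam c k Q' (act (2*k) g r) - Lam c k Q r = (\<Sum>i\<le>2*k. coeff r i *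
     ((\<Sum>j\<le>2*k. inverse (of_nat ((2*k) choose j)) * coeff (c (2*k) Q') j * coeff (Bp g (2*k) i) j)
      - inverse (of_nat ((2*k) choose i)) * coeff (c (2*k) Q) i))"
proof -
  have "Lam c k Q' (act (2*k) g r) = (\<Sum>j\<le>2*k. \<Sum>i\<le>2*k. coeff r i *
          (inverse (of_nat ((2*k) choose j)) * coeff (c (2*k) Q') j * coeff (Bp g (2*k) i) j))"
    unfolding Lam_def coeff_act by (simp add: sum_distrib_left algebra_simps)
  also have "\<dots> = (\<Sum>i\<le>2*k. coeff r i *
     (\<Sum>j\<le>2*k. inverse (of_nat ((2*k) choose j)) * coeff (c (2*k) Q') j * coeff (Bp g (2*k) i) j))"
    by (subst sum.swap) (simp add: sum_distrib_left)
  finally show ?thesis unfolding Lam_def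
    by (simp add: right_diff_distrib sum_subtractf algebra_simps)
qed

lemma Lam_inv:
  fixes c :: "nat \<Rightarrow> (nat \<Rightarrow> 'k::field_char_0^3) \<Rightarrow> 'k poly" and g :: "'k^2^2"
  assumes hinv: "\<And>e. hev (2*k) (c (2*k) Q') (g *v e) = hev (2*k) (c (2*k) Q) e"
  shows "Lam c k Q' (act (2*k) g r) = Lam c k Q r"
proof -
  define n where "n = 2*k"
  define \<delta> where "\<delta> i = (\<Sum>j\<le>2*k. inverse (of_nat ((2*k) choose j)) * coeff (c (2*k) Q') j * coeff (Bp g (2*k) i) j)
      - inverse (of_nat ((2*k) choose i)) * coeff (c (2*k) Q) i" for i
  have D: "Lam c k Q' (act (2*k) g r') - Lam c k Q r' = (\<Sum>i\<le>2*k. coeff r' i * \<delta> i)" for r'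
    unfolding \<delta>_def by (rule Lam_act_form)
  define p where "p = (\<Sum>i\<le>2*k. monom (of_nat ((2*k) choose i) * \<delta> i) i)"
  have "poly p t = 0" for t
  proof -
    define e :: "'k^2" where "e = mk2 1 t"
    have "0 = hev (2*k) (c (2*k) Q') (g *v e) - hev (2*k) (c (2*k) Q) e" using hinv by simp
    also have "\<dots> = Lam c k Q' ([:(g *v e)$0, (g *v e)$1:]^(2*k)) - Lam c k Q ([:e$0, e$1:]^(2*k))"
      by (simp add: Lam_lin)
    also have "\<dots> = Lam c k Q' (act (2*k) g ([:e$0, e$1:]^(2*k))) - Lam c k Q ([:e$0, e$1:]^(2*k))"
      by (simp add: act_lin)
    also have "\<dots> = (\<Sum>i\<le>2*k. coeff ([:e$0, e$1:]^(2*k)) i * \<delta> i)" by (rule D)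
    also have "\<dots> = poly p t"
      unfolding p_def poly_sum poly_monom lin_pow_coeff e_def by (simp add: algebra_simps)
    finally show ?thesis by simp
  qed
  then have "p = 0" using poly_all_0_iff_0 by blast
  have "\<delta> i = 0" if "i \<le> 2*k" for i
  proof -
    have "coeff p i = of_nat ((2*k) choose i) * \<delta> i"
      unfolding p_def coeff_sum using that by (simp add: sum.delta)
    then have "of_nat ((2*k) choose i) * \<delta> i = 0" using \<open>p = 0\<close> by simp
    moreover have "of_nat ((2*k) choose i) \<noteq> (0::'k)" using that by simp
    ultimately show ?thesis by simp
  qed
  then have "Lam c k Q' (act (2*k) g r) - Lam c k Q r = 0" unfolding D by simp
  then show ?thesis by simp
qed


definition CQ :: "nat \<Rightarrow> (('k ^ 2) \<times> (nat \<Rightarrow> 'k ^ 3) \<Rightarrow> 'k) set" where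
  "CQ l = {(\<lambda>(e,Q). Q i $ j) | i j. 1 \<le> i \<and> i \<le> l}"

lemma CQ_coord: "1 \<le> i \<Longrightarrow> i \<le> l \<Longrightarrow> (\<lambda>x. snd x i $ j) \<in> pfun (CQ l)"
proof -
  assume "1 \<le> i" "i \<le> l"
  then have "(\<lambda>(e::'a^2, Q::nat \<Rightarrow> 'a^3). Q i $ j) \<in> CQ l" unfolding CQ_def by blast
  moreover have "(\<lambda>x::('a^2) \<times> (nat \<Rightarrow> 'a^3). snd x i $ j) = (\<lambda>(e, Q). Q i $ j)" by auto
  ultimately show ?thesis using pf_coord by metis
qed

lemma sum_extend:
  fixes f :: "nat \<Rightarrow> 'a::comm_monoid_add"
  assumes "N \<le> M" "\<And>n. N < n \<Longrightarrow> f n = 0"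
  shows "(\<Sum>n\<le>N. f n) = (\<Sum>n\<le>M. f n)"
  by (rule sum.mono_neutral_left) (use assms in auto)

lemma cauchy_fin:
  fixes h :: "nat \<Rightarrow> nat \<Rightarrow> 'a::comm_monoid_add"
  assumes "\<And>a b. N < a \<Longrightarrow> h a b = 0" "\<And>a b. N' < b \<Longrightarrow> h a b = 0"
  shows "(\<Sum>a\<le>N. \<Sum>b\<le>N'. h a b) = (\<Sum>n\<le>N+N'. \<Sum>a\<le>n. h a (n - a))"
proof -
  have "(\<Sum>a\<le>N. \<Sum>b\<le>N'. h a b) = (\<Sum>(a,b)\<in>{..N}\<times>{..N'}. h a b)"
    by (simp add: sum.cartesian_product)
  also have "\<dots> = (\<Sum>(a,b)\<in>{(a,b). a + b \<le> N + N'}. h a b)"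
  proof (rule sum.mono_neutral_left)
    have "{(a,b). a + b \<le> N + N'} \<subseteq> {..N+N'} \<times> {..N+N'}" by auto
    then show "finite {(a,b). a + b \<le> N + N'}" by (rule finite_subset) auto
    show "{..N} \<times> {..N'} \<subseteq> {(a,b). a + b \<le> N + N'}" by auto
    show "\<forall>i\<in>{(a,b). a + b \<le> N + N'} - {..N} \<times> {..N'}. (case i of (a, b) \<Rightarrow> h a b) = 0"
      using assms by (auto simp: not_le) (metis not_le)+
  qed
  also have "\<dots> = (\<Sum>n\<le>N+N'. \<Sum>a\<le>n. h a (n - a))" by (rule sum.triangle_reindex_eq)
  finally show ?thesis .
qed

lemma coeff_pC: "coeff [:a:] j = (if j = 0 then a else 0)"
  by (cases j) auto

lemma rep:
  fixes F :: "('k::field_char_0 ^ 2) \<times> (nat \<Rightarrow> 'k ^ 3) \<Rightarrow> 'k"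
  assumes "F \<in> pfun (coords_W l)"
  shows "\<exists>N P. (\<forall>n j. (\<lambda>x. coeff (P n x) j) \<in> pfun (CQ l)) \<and> (\<forall>n x. degree (P n x) \<le> n) \<and>
     (\<forall>n x. N < n \<longrightarrow> P n x = 0) \<and> (\<forall>x. F x = (\<Sum>n\<le>N. hev n (P n x) (fst x)))"
  using assms
proof induction
  case (pf_const c)
  show ?case
    by (rule exI[of _ 0], rule exI[of _ "\<lambda>n x. if n = 0 then [:c:] else 0"])
      (auto intro: pfun.pf_const simp: hev_const)
next
  case (pf_coord y)
  then consider (E) j where "y = (\<lambda>(e,Q). e $ j)" | (Q) i j where "y = (\<lambda>(e,Q). Q i $ j)" "1 \<le> i" "i \<le> l"
    unfolding coords_W_def by blast
  then show ?case
  proof cases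
    case E
    define p :: "'k poly" where "p = (if j = 0 then [:1:] else [:0,1:])"
    have dp: "degree p \<le> Suc 0" by (simp add: p_def)
    have hp: "hev (Suc 0) p u = u $ j" for u
    proof -
      have "j = 0 \<or> j = 1" using exhaust_2[of j] by auto
      then show ?thesis by (auto simp: p_def hev_def)
    qed
    show ?thesis
      by (rule exI[of _ 1], rule exI[of _ "\<lambda>n x. if n = 1 then p else 0"])
        (use dp in \<open>auto intro: pfun.pf_const simp: hp E case_prod_beta\<close>)
  next
    case Q
    have c: "(\<lambda>x::('k^2) \<times> (nat \<Rightarrow> 'k^3). coeff (if n = 0 then [:snd x i $ j:] else 0) k) \<in> pfun (CQ l)" for n k :: nat
    proof (cases "n = 0 \<and> k = 0")
      case True then show ?thesis using CQ_coord[OF Q(2,3)] by simp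
    next
      case False
      then have "(\<lambda>x::('k^2) \<times> (nat \<Rightarrow> 'k^3). coeff (if n = 0 then [:snd x i $ j:] else 0) k) = (\<lambda>_. 0)"
        by (auto simp: coeff_pC)
      then show ?thesis by (simp only:) (rule pfun.pf_const)
    qed
    show ?thesis
      by (rule exI[of _ 0], rule exI[of _ "\<lambda>n x. if n = 0 then [:snd x i $ j:] else 0"])
        (use c in \<open>auto simp: hev_const Q case_prod_beta\<close>)
  qed
next
  case (pf_add f g)
  from pf_add.IH(1) obtain N P where h1: "\<forall>n j. (\<lambda>x. coeff (P n x) j) \<in> pfun (CQ l)" "\<forall>n x. degree (P n x) \<le> n"
     "\<forall>n x. N < n \<longrightarrow> P n x = 0" "\<forall>x. f x = (\<Sum>n\<le>N. hev n (P n x) (fst x))" by blast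
  from pf_add.IH(2) obtain M R where h2: 
     "\<forall>n j. (\<lambda>x. coeff (R n x) j) \<in> pfun (CQ l)" "\<forall>n x. degree (R n x) \<le> n"
     "\<forall>n x. M < n \<longrightarrow> R n x = 0" "\<forall>x. g x = (\<Sum>n\<le>M. hev n (R n x) (fst x))" by blast
  note h = h1 h2
  show ?case
  proof (rule exI[of _ "max N M"], rule exI[of _ "\<lambda>n x. P n x + R n x"], intro conjI allI impI)
    fix n j show "(\<lambda>x. coeff (P n x + R n x) j) \<in> pfun (CQ l)"
      using h(1,5) by (simp add: pfun.pf_add)
  next
    fix n x show "degree (P n x + R n x) \<le> n" using h(2,6) by (meson degree_add_le)
  next
    fix n x assume "max N M < n" then show "P n x + R n x = 0" using h(3)[rule_format, of n x] h(7)[rule_format, of n x] by simp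
  next
    fix x
    have "f x = (\<Sum>n\<le>max N M. hev n (P n x) (fst x))"
      unfolding h(4)[rule_format]
    proof (rule sum_extend)
      fix n assume "N < n" then show "hev n (P n x) (fst x) = 0" using h(3)[rule_format, of n x] by simp
    qed simp
    moreover have "g x = (\<Sum>n\<le>max N M. hev n (R n x) (fst x))"
      unfolding h(8)[rule_format]
    proof (rule sum_extend)
      fix n assume "M < n" then show "hev n (R n x) (fst x) = 0" using h(7)[rule_format, of n x] by simp
    qed simp
    ultimately show "f x + g x = (\<Sum>n\<le>max N M. hev n (P n x + R n x) (fst x))"
      by (simp add: hev_add sum.distrib)
  qed
next
  case (pf_mult f g)
  from pf_mult.IH(1) obtain N P where h1: "\<forall>n j. (\<lambda>x. coeff (P n x) j) \<in> pfun (CQ l)" "\<forall>n x. degree (P n x) \<le> n"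
     "\<forall>n x. N < n \<longrightarrow> P n x = 0" "\<forall>x. f x = (\<Sum>n\<le>N. hev n (P n x) (fst x))" by blast
  from pf_mult.IH(2) obtain M R where h2: 
     "\<forall>n j. (\<lambda>x. coeff (R n x) j) \<in> pfun (CQ l)" "\<forall>n x. degree (R n x) \<le> n"
     "\<forall>n x. M < n \<longrightarrow> R n x = 0" "\<forall>x. g x = (\<Sum>n\<le>M. hev n (R n x) (fst x))" by blast
  note h = h1 h2
  show ?case
  proof (rule exI[of _ "N + M"], rule exI[of _ "\<lambda>n x. \<Sum>a\<le>n. P a x * R (n - a) x"], intro conjI allI impI)
    fix n j show "(\<lambda>x. coeff (\<Sum>a\<le>n. P a x * R (n - a) x) j) \<in> pfun (CQ l)"
      unfolding coeff_sum coeff_mult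
      using h(1,5) by (intro pfun_sum pfun.pf_mult) auto
  next
    fix n x show "degree (\<Sum>a\<le>n. P a x * R (n - a) x) \<le> n"
    proof (rule degree_sum_le)
      fix a assume "a \<in> {..n}"
      then have "a \<le> n" by simp
      then show "degree (P a x * R (n - a) x) \<le> n"
        using degree_mult_le[of "P a x" "R (n - a) x"] h(2)[rule_format, of a x] h(6)[rule_format, of "n - a" x]
        by linarith
    qed simp
  next
    fix n x assume "N + M < n"
    then show "(\<Sum>a\<le>n. P a x * R (n - a) x) = 0"
    proof (intro sum.neutral ballI)
      fix a assume "a \<in> {..n}"
      show "P a x * R (n - a) x = 0"
      proof (cases "N < a")
        case True then show ?thesis using h(3)[rule_format, of a x] by simp
      next
        case False then have "M < n - a" using \<open>N + M < n\<close> by linarith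
        then show ?thesis using h(7)[rule_format, of "n - a" x] by simp
      qed
    qed
  next
    fix x
    have "f x * g x = (\<Sum>a\<le>N. \<Sum>b\<le>M. hev a (P a x) (fst x) * hev b (R b x) (fst x))"
      unfolding h(4)[rule_format] h(8)[rule_format] by (simp add: sum_product)
    also have "\<dots> = (\<Sum>a\<le>N. \<Sum>b\<le>M. hev (a + b) (P a x * R b x) (fst x))"
      by (intro sum.cong refl, rule hev_mult[symmetric]) (use h(2,6) in blast)+
    also have "\<dots> = (\<Sum>n\<le>N+M. \<Sum>a\<le>n. hev (a + (n - a)) (P a x * R (n - a) x) (fst x))"
      proof (rule cauchy_fin)
      fix a b assume "N < a" then show "hev (a + b) (P a x * R b x) (fst x) = 0" using h(3)[rule_format, of a x] by simp
    next
      fix a b assume "M < b" then show "hev (a + b) (P a x * R b x) (fst x) = 0" using h(7)[rule_format, of b x] by simp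
    qed
    also have "\<dots> = (\<Sum>n\<le>N+M. hev n (\<Sum>a\<le>n. P a x * R (n - a) x) (fst x))"
      by (simp add: hev_sum)
    finally show "f x * g x = (\<Sum>n\<le>N+M. hev n (\<Sum>a\<le>n. P a x * R (n - a) x) (fst x))" .
  qed
qed


lemma mv_scale: "(g::'k::comm_ring_1^2^2) *v (t *s e) = t *s (g *v e)"
  by (simp add: vec_eq_iff mv2 algebra_simps)

definition mI :: "'k::comm_ring_1^2^2" where "mI = (\<chi> i j. if i = j then -1 else 0)"

lemma mI_SL2: "mI \<in> SL2"
  unfolding SL2_def det_2 by (simp add: mI_def)

lemma mI_sym2: "sym2_act mI w = w"
  by (simp add: vec_eq_iff forall_3 sym2_act_def mI_def)

lemma mI_mv: "mI *v e = (-1) *s (e::'k::comm_ring_1^2)"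
  unfolding vec_eq_iff
proof
  fix i :: 2
  have "i = 0 \<or> i = 1" using exhaust_2[of i] by auto
  then show "(mI *v e) $ i = ((-1) *s e) $ i" by (auto simp: mv2 mI_def)
qed

lemma even_odd_split:
  fixes h :: "nat \<Rightarrow> 'a::comm_monoid_add"
  shows "(\<Sum>n\<le>2*N+1. h n) = (\<Sum>k\<le>N. h (2*k) + h (2*k+1))"
proof (induction N)
  case 0 then show ?case by simp
next
  case (Suc N)
  have e: "2*Suc N+1 = Suc (Suc (2*N+1))" by simp
  show ?case unfolding e sum.atMost_Suc Suc.IH by (simp add: algebra_simps)
qed

lemma pfun_if: "f \<in> pfun C \<Longrightarrow> g \<in> pfun C \<Longrightarrow> (\<lambda>v. if P then f v else g v) \<in> pfun C"
  by (cases P) auto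

lemma pw_coeff: "coeff (pw w) i = (if i = 0 then w$0 else if i = 1 then w$1 else if i = 2 then w$2 else 0)"
proof -
  consider "i = 0" | "i = 1" | "i = 2" | j where "i = Suc (Suc (Suc j))"
    by (metis One_nat_def Suc_1 not0_implies_Suc)
  then show ?thesis by cases (simp_all add: pw_def numeral_2_eq_2)
qed

lemma pw_coeff_pfun: "(\<lambda>v. coeff (pw (v l)) i) \<in> pfun (coords_V l)"
  unfolding pw_coeff by (intro pfun_if V_coord pf_const) auto

lemma pw_pow_coeff_pfun: "(\<lambda>v::nat \<Rightarrow> 'k::comm_ring_1^3. coeff (pw (v l) ^ k) j) \<in> pfun (coords_V l)"
proof (induction k arbitrary: j)
  case 0
  have "(\<lambda>v::nat \<Rightarrow> 'k^3. coeff (pw (v l) ^ 0) j) = (\<lambda>v. coeff 1 j)" by simp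
  then show ?case by (simp only:) (rule pf_const)
next
  case (Suc k)
  have "(\<lambda>v::nat \<Rightarrow> 'k^3. coeff (pw (v l) ^ Suc k) j) = (\<lambda>v. \<Sum>i\<le>j. coeff (pw (v l)) i * coeff (pw (v l) ^ k) (j - i))"
    by (simp add: coeff_mult)
  also have "\<dots> \<in> pfun (coords_V l)"
    by (intro pfun_sum pf_mult pw_coeff_pfun) (use Suc.IH in blast)+
  finally show ?case .
qed

lemma odd_hev:
  fixes p :: "'k::field_char_0 poly"
  assumes "hev n p ((-1) *s e) = hev n p e" "odd n"
  shows "hev n p e = 0"
proof -
  have "(-1)^n * hev n p e = hev n p e" using assms(1) unfolding hev_scale .
  then have "- hev n p e = hev n p e" by (simp only: neg_one_odd_power[OF assms(2)] mult_minus1)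
  then have "hev n p e + hev n p e = 0" by (metis add.left_inverse)
  then have "2 * hev n p e = 0" by (simp only: mult_2)
  then show ?thesis by simp
qed

lemma part2:
  fixes F :: "('k::field_char_0 ^ 2) \<times> (nat \<Rightarrow> 'k ^ 3) \<Rightarrow> 'k"
  assumes ac: "alg_closed TYPE('k)" and FI: "F \<in> inv_SL2 l"
  shows "\<exists>f\<in>inv_SO3 l. F = f \<circ> phi l"
proof -
  have Fp: "F \<in> pfun (coords_W l)"
    and Fi: "\<And>g e Q. g \<in> SL2 \<Longrightarrow> F (g *v e, \<lambda>i. sym2_act g (Q i)) = F (e, Q)"
    using FI unfolding inv_SL2_def by auto
  obtain N P where P: "\<forall>n j. (\<lambda>x. coeff (P n x) j) \<in> pfun (CQ l)" "\<forall>n x. degree (P n x) \<le> n"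
     "\<forall>n x. N < n \<longrightarrow> P n x = 0" "\<forall>x. F x = (\<Sum>n\<le>N. hev n (P n x) (fst x))"
    using rep[OF Fp] by blast
  define c where "c n Q = P n (0, Q)" for n Q
  have Ploc: "P n (e, Q) = P n (e', Q')" if "\<And>i. 1 \<le> i \<Longrightarrow> i \<le> l \<Longrightarrow> Q i = Q' i" for n e Q e' Q'
  proof (rule poly_eqI)
    fix j
    show "coeff (P n (e, Q)) j = coeff (P n (e', Q')) j"
    proof (rule pfun_local[of "\<lambda>x. coeff (P n x) j" "CQ l"])
      show "(\<lambda>x. coeff (P n x) j) \<in> pfun (CQ l)" using P(1) by blast
      fix cq :: "('k^2) \<times> (nat \<Rightarrow> 'k^3) \<Rightarrow> 'k" assume "cq \<in> CQ l"
      then obtain i j' where "cq = (\<lambda>(e,Q). Q i $ j')" "1 \<le> i" "i \<le> l" unfolding CQ_def by blast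
      then show "cq (e, Q) = cq (e', Q')" using that by simp
    qed
  qed
  have c_loc: "c n Q = c n Q'" if "\<And>i. 1 \<le> i \<Longrightarrow> i \<le> l \<Longrightarrow> Q i = Q' i" for n Q Q'
    unfolding c_def using Ploc that by blast
  have c_deg: "degree (c n Q) \<le> n" for n Q unfolding c_def using P(2) by blast
  have c_van: "N < n \<Longrightarrow> c n Q = 0" for n Q unfolding c_def using P(3) by blast
  have F_rep: "F (e, Q) = (\<Sum>n\<le>N. hev n (c n Q) e)" for e Q
    unfolding P(4)[rule_format] c_def using Ploc[of Q Q _ e 0] by simp
  have Ginv: "hev n (c n (\<lambda>i. sym2_act g (Q i))) (g *v e) = hev n (c n Q) e" if g: "g \<in> SL2" for g n e Q
  proof (cases "n \<le> N")
    case False then show ?thesis using c_van by simp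
  next
    case True
    define \<delta> where "\<delta> m = hev m (c m (\<lambda>i. sym2_act g (Q i))) (g *v e) - hev m (c m Q) e" for m
    define p where "p = (\<Sum>m\<le>N. monom (\<delta> m) m)"
    have "poly p t = 0" for t
    proof -
      have "F (t *s (g *v e), \<lambda>i. sym2_act g (Q i)) = F (t *s e, Q)"
        using Fi[OF g, of "t *s e" Q] by (simp add: mv_scale)
      then have "(\<Sum>m\<le>N. t^m * hev m (c m (\<lambda>i. sym2_act g (Q i))) (g *v e)) = (\<Sum>m\<le>N. t^m * hev m (c m Q) e)"
        unfolding F_rep hev_scale .
      then have "(\<Sum>m\<le>N. t^m * \<delta> m) = 0"
        unfolding \<delta>_def by (simp add: right_diff_distrib sum_subtractf)
      then show ?thesis unfolding p_def poly_sum poly_monom by (simp add: mult.commute)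
    qed
    then have "p = 0" using poly_all_0_iff_0 by blast
    then have "coeff p n = 0" by simp
    moreover have "coeff p n = \<delta> n" unfolding p_def coeff_sum using True by (simp add: sum.delta)
    ultimately show ?thesis unfolding \<delta>_def by simp
  qed
  have odd0: "hev n (c n Q) e = 0" if "odd n" for n Q e
  proof -
    have "hev n (c n Q) ((-1) *s e) = hev n (c n Q) e"
      using Ginv[OF mI_SL2, of n Q e] unfolding mI_sym2 mI_mv by (simp only:)
    then show ?thesis using that by (rule odd_hev)
  qed
  define QV where "QV v = (\<lambda>i. v (i - 1))" for v :: "nat \<Rightarrow> 'k^3"
  define f where "f v = (\<Sum>k\<le>N. Lam c k (QV v) (pw (v l) ^ k))" for v
  have cQV: "(\<lambda>v. coeff (c m (QV v)) j) \<in> pfun (coords_V l)" for m j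
  proof -
    have "(\<lambda>v. coeff (P m ((\<lambda>v. (0, QV v)) v)) j) \<in> pfun (coords_V l)"
    proof (rule pfun_comp[of "\<lambda>x. coeff (P m x) j" "CQ l"])
      show "(\<lambda>x. coeff (P m x) j) \<in> pfun (CQ l)" using P(1) by blast
      fix cq :: "('k^2) \<times> (nat \<Rightarrow> 'k^3) \<Rightarrow> 'k" assume "cq \<in> CQ l"
      then obtain i j' where ij: "cq = (\<lambda>(e,Q). Q i $ j')" "1 \<le> i" "i \<le> l" unfolding CQ_def by blast
      then have il: "i - 1 \<le> l" by simp
      show "(\<lambda>x. cq (0, QV x)) \<in> pfun (coords_V l)"
        unfolding QV_def ij(1) using V_coord[OF il, of j'] by simp
    qed
    then show ?thesis unfolding c_def by simp
  qed
  have fp: "f \<in> pfun (coords_V l)"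
    unfolding f_def Lam_def
    by (intro pfun_sum pfun_mult_const pf_mult cQV pw_pow_coeff_pfun) simp_all
  have f_phi: "f (phi l (e, Q)) = F (e, Q)" for e Q
  proof -
    have cq: "c m (QV (phi l (e, Q))) = c m Q" for m
      by (rule c_loc) (auto simp: QV_def phi_def)
    have "f (phi l (e, Q)) = (\<Sum>k\<le>N. hev (2*k) (c (2*k) Q) e)"
    proof -
      have pl: "phi l (e, Q) l = sq_vec e" by (simp add: phi_def)
      show ?thesis unfolding f_def pl pw_sq power_mult[symmetric] Lam_lin cq ..
    qed
    also have "\<dots> = (\<Sum>k\<le>N. hev (2*k) (c (2*k) Q) e + hev (2*k+1) (c (2*k+1) Q) e)"
      by (simp add: odd0)
    also have "\<dots> = (\<Sum>n\<le>2*N+1. hev n (c n Q) e)" by (rule even_odd_split[symmetric])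
    also have "\<dots> = (\<Sum>n\<le>N. hev n (c n Q) e)"
      by (rule sum_extend[symmetric]) (simp_all add: c_van)
    finally show ?thesis using F_rep by simp
  qed
  have f_sl2: "f (\<lambda>i. sym2_act g (v i)) = f v" if g: "g \<in> SL2" for g v
  proof -
    have q: "QV (\<lambda>i. sym2_act g (v i)) = (\<lambda>i. sym2_act g (QV v i))" by (simp add: QV_def)
    have "Lam c k (\<lambda>i. sym2_act g (QV v i)) (pw (sym2_act g (v l)) ^ k) = Lam c k (QV v) (pw (v l) ^ k)" for k
    proof -
      have "pw (sym2_act g (v l)) ^ k = act (2*k) g (pw (v l) ^ k)"
        using act_pow[OF degree_pw, of k g "v l"] act_pw[of g "v l"] by simp
      moreover have "Lam c k (\<lambda>i. sym2_act g (QV v i)) (act (2*k) g (pw (v l) ^ k)) = Lam c k (QV v) (pw (v l) ^ k)"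
        by (rule Lam_inv) (rule Ginv[OF g])
      ultimately show ?thesis by simp
    qed
    then show ?thesis unfolding f_def q by simp
  qed
  have "f \<in> inv_SO3 l"
    unfolding inv_SO3_def
  proof (intro CollectI conjI ballI allI fp)
    fix M :: "'k^3^3" and v assume "M \<in> SO3"
    then obtain g where g: "g \<in> SL2" "M = Mg g" using surj_SO3[OF ac] by blast
    show "f (\<lambda>i. M *v v i) = f v" using f_sl2[OF g(1)] by (simp add: g(2) Mg_mult)
  qed
  moreover have "F = f \<circ> phi l" by (auto simp: fun_eq_iff f_phi)
  ultimately show ?thesis by blast
qed


theorem lemma3:
  fixes l :: nat
  assumes "alg_closed TYPE('k::field_char_0)"
  shows "(\<forall>f \<in> (inv_SO3 l :: ((nat \<Rightarrow> 'k ^ 3) \<Rightarrow> 'k) set). f \<circ> phi l \<in> inv_SL2 l)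
    \<and> (\<forall>F \<in> (inv_SL2 l :: (('k ^ 2) \<times> (nat \<Rightarrow> 'k ^ 3) \<Rightarrow> 'k) set).
          \<exists>f \<in> inv_SO3 l. F = f \<circ> phi l)
    \<and> (\<forall>f \<in> (inv_SO3 l :: ((nat \<Rightarrow> 'k ^ 3) \<Rightarrow> 'k) set).
          f \<circ> phi l = (\<lambda>_. 0) \<longleftrightarrow> (\<exists>h \<in> inv_SO3 l. f = (\<lambda>v. dlast l v * h v)))"
proof (intro conjI ballI)
  fix f :: "(nat \<Rightarrow> 'k ^ 3) \<Rightarrow> 'k" assume "f \<in> inv_SO3 l"
  then show "f \<circ> phi l \<in> inv_SL2 l" by (rule part1)
next
  fix F :: "('k ^ 2) \<times> (nat \<Rightarrow> 'k ^ 3) \<Rightarrow> 'k" assume "F \<in> inv_SL2 l"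
  then show "\<exists>f\<in>inv_SO3 l. F = f \<circ> phi l" by (rule part2[OF assms])
next
  fix f :: "(nat \<Rightarrow> 'k ^ 3) \<Rightarrow> 'k" assume f: "f \<in> inv_SO3 l"
  show "f \<circ> phi l = (\<lambda>_. 0) \<longleftrightarrow> (\<exists>h\<in>inv_SO3 l. f = (\<lambda>v. dlast l v * h v))"
    using part3_fw[OF assms f] part3_bw by blast
qed

end
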